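(* Let $n\ge 2$, $\sigma\ge 0$, let $z\in\mathbb{C}^n$ satisfy $|z_1|=\cdots=|z_n|=1$, let $W\in\mathbb{C}^{n\times n}$ be $z$-discordant, and let $C=zz^*+\sigma W$. If $x$ is a global optimizer of \[\max_{x\in\mathbb{C}^n} x^*Cx \quad\text{subject to } |x_1|=\cdots=|x_n|=1\] with global phase such that $z^*x=|z^*x|$, then \[\|x-z\|_\infty\le 6\left(\sqrt{\log n}+29\sigma\right)\sigma n^{-1/2}.\]
   Context: For $z\in\mathbb{C}^n$ with unit-modulus entries, a matrix $W\in\mathbb{C}^{n\times n}$ is called $z$-discordant if it is Hermitian and satisfies both $\|W\|_{\mathrm{op}}\le 3\sqrt{n}$ (operator norm = largest singular value) and $\|Wz\|_\infty\le 3\sqrt{n\log n}$, with $\log$ the natural logarithm. *)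

theory Defs
  imports "HOL-Analysis.Analysis"
begin

text \<open>Vectors in C^n are complex^'n, n x n matrices are complex^'n^'n (n = CARD('n)).\<close>

definition hermitian :: "complex^'n^'n \<Rightarrow> bool" where
  "hermitian W \<longleftrightarrow> (\<forall>i j. W $ i $ j = cnj (W $ j $ i))"

text \<open>Operator norm (largest singular value) w.r.t. the Euclidean norm.\<close>
definition op_norm :: "complex^'n^'n \<Rightarrow> real" where
  "op_norm W = onorm (\<lambda>v. W *v v)"

definition inf_norm :: "complex^'n \<Rightarrow> real" where
  "inf_norm v = Max (range (\<lambda>i. cmod (v $ i)))"

definition cinner :: "complex^'n \<Rightarrow> complex^'n \<Rightarrow> complex" where
  "cinner u v = (\<Sum>i\<in>UNIV. cnj (u $ i) * v $ i)"

definition qform :: "complex^'n^'n \<Rightarrow> complex^'n \<Rightarrow> complex" where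
  "qform C x = cinner x (C *v x)"

definition unimod :: "complex^'n \<Rightarrow> bool" where
  "unimod x \<longleftrightarrow> (\<forall>i. cmod (x $ i) = 1)"

definition discordant :: "complex^'n \<Rightarrow> complex^'n^'n \<Rightarrow> bool" where
  "discordant z W \<longleftrightarrow> hermitian W
     \<and> op_norm W \<le> 3 * sqrt (real CARD('n))
     \<and> inf_norm (W *v z) \<le> 3 * sqrt (real CARD('n) * ln (real CARD('n)))"

definition outer :: "complex^'n \<Rightarrow> complex^'n^'n" where
  "outer z = (\<chi> i j. z $ i * cnj (z $ j))"

end

theory Submission
  imports Defs
begin


lemma final_arith:
  fixes N s \<sigma> l d m \<epsilon> :: real
  assumes N2: "N \<ge> 2" and sN: "s = sqrt N" and sg: "\<sigma> \<ge> 0" and l0: "0 \<le> l" and ls: "l \<le> s"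
    and d0: "d \<ge> 0" and m0: "m \<ge> 0" and dm: "d\<^sup>2 = 2*N - 2*m"
    and F1: "N\<^sup>2 - m\<^sup>2 \<le> 6*\<sigma>* s*N" and F2: "N\<^sup>2 - m\<^sup>2 \<le> \<sigma>*(6*N*d + 3* s*d\<^sup>2)"
    and e0: "\<epsilon> \<ge> 0" and e2: "\<epsilon> \<le> 2" and ed: "\<epsilon> \<le> d"
    and F3: "\<epsilon>*(m + 1 - 3*\<sigma>* s) \<le> 6*\<sigma>* s*(l + d)"
  shows "\<epsilon> \<le> 6*(l + 29*\<sigma>)*\<sigma>/s"
proof -
  have s1: "s \<ge> 1" using N2 sN by (simp add: real_le_rsqrt)
  have ss: "s* s = N" using N2 sN by simp
  define t where "t = \<sigma>/s"
  have sgt: "\<sigma> = t* s" using s1 by (simp add: t_def)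
  have t0: "t \<ge> 0" using sg s1 by (simp add: t_def)
  have B: "6*(l + 29*\<sigma>)*\<sigma>/s = 6*(l + 29*t* s)*t" using s1 sgt by (simp add: field_simps)
  define p where "p = N - m"
  have pd: "d*d = 2*p" using dm by (simp add: p_def power2_eq_square)
  have p0: "p \<ge> 0" using pd by (smt (verit) zero_le_square)
  have Nm: "N\<^sup>2 - m\<^sup>2 = p*(2*N - p)" by (simp add: p_def power2_eq_square algebra_simps)
  have sgsN: "\<sigma>* s = t*N" using sgt ss by (simp add: algebra_simps)
  have "p*N \<le> p*(2*N-p)" apply (rule mult_left_mono) using p0 m0 by (auto simp: p_def)
  also have "\<dots> \<le> 6*\<sigma>* s*N" using F1 Nm by simp
  also have "\<dots> = 6*(\<sigma>* s)*N" by simp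
  also have "\<dots> = 6*t*N*N" using sgsN by simp
  finally have "p*N \<le> (6*t*N)*N" by simp
  hence P1: "p \<le> 6*t*N" using N2 by simp
  have F2': "p*(2*N - p) \<le> 6*t* s*N*d + 6*t*N*p"
  proof -
    have "\<sigma>*(6*N*d + 3* s*d\<^sup>2) = 6*t* s*N*d + 3*t*(s* s)*(d*d)" unfolding sgt power2_eq_square by (simp add: algebra_simps)
    also have "\<dots> = 6*t* s*N*d + 6*t*N*p" using ss pd by simp
    finally show ?thesis using F2 Nm by simp
  qed
  have "p*(2*N - 12*t*N) \<le> p*(2*N-p-6*t*N)" apply (rule mult_left_mono) using P1 p0 by (auto simp: algebra_simps)
  also have "\<dots> \<le> 6*t* s*N*d" using F2' by (simp add: algebra_simps)
  finally have X: "(p*(2 - 12*t))*N \<le> (6*t* s*d)*N" by (simp add: algebra_simps)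
  have "p*(2-12*t) \<le> 6*t* s*d" by (rule mult_right_le_imp_le[OF X]) (use N2 in simp)
  moreover have "(d*(1-6*t))*d = p*(2-12*t)" proof - have "(d*(1-6*t))*d = (d*d)*(1-6*t)" by (simp add: algebra_simps) thus ?thesis using pd by (simp add: algebra_simps) qed
  ultimately have "(d*(1-6*t))*d \<le> (6*t* s)*d" by (simp add: algebra_simps)
  hence D: "d*(1-6*t) \<le> 6*t* s"
  proof (cases "d = 0")
    case True thus ?thesis using t0 s1 by simp
  next
    case False then have "0 < d" using d0 by simp
    with \<open>(d*(1-6*t))*d \<le> (6*t* s)*d\<close> show ?thesis by (rule mult_right_le_imp_le)
  qed
  have "\<epsilon> \<le> 6*(l + 29*t* s)*t"
  proof (cases "t \<ge> (11/100)")
    case True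
    have "2 \<le> 174*(t*t)* s"
    proof -
      have "(11/100)*(11/100) \<le> t*t" apply (rule mult_mono) using True by (auto)
      hence tt: "(121/10000) \<le> t*t" by simp
      have "(121/10000)*1 \<le> (t*t)* s" by (rule mult_mono[OF tt]) (use s1 in auto)
      hence "174*(t*t)* s \<ge> 174*((121/10000))*1" by (simp add: algebra_simps)
      thus ?thesis by simp
    qed
    also have "\<dots> \<le> 6*(l + 29*t* s)*t" using l0 t0 s1 by (simp add: algebra_simps)
    finally show ?thesis using e2 by simp
  next
    case F: False
    show ?thesis
    proof (cases "t \<ge> (3/50)")
      case True
      have q: "29*t*(1-6*t) \<ge> 1"
      proof -
        have "(t - (3/50))*((11/100) - t) \<ge> 0" using True F by auto
        moreover have "(t - (3/50))*((11/100) - t) = (17/100)*t - (33/5000) - t*t" by (simp add: field_simps)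
        ultimately have h2: "t*t \<le> (17/100)*t - (33/5000)" by linarith
        have "174*(t*t) \<le> 29*t - 1" using h2 F by linarith
        thus ?thesis by (simp add: algebra_simps)
      qed
      have "d \<le> d*(29*t*(1-6*t))" using q d0 by (simp add: mult_le_cancel_left1)
      also have "\<dots> = 29*t*(d*(1-6*t))" by simp
      also have "\<dots> \<le> 29*t*(6*t* s)" apply (rule mult_left_mono) using D t0 by (auto)
      also have "\<dots> \<le> 6*(l + 29*t* s)*t" using l0 t0 by (simp add: algebra_simps)
      finally show ?thesis using ed by simp
    next
      case T: False
      have "d*(16/25) \<le> d*(1-6*t)" apply (rule mult_left_mono) using T d0 by (auto)
      moreover have "t* s \<ge> 0" using t0 s1 by simp
      ultimately have "d*(16/25) \<le> 6*(t* s)" "t* s \<ge> 0" using D by (auto simp: algebra_simps)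
      hence "d \<le> 10*(t* s)" by linarith
      hence d10: "d \<le> 10*t* s" by (simp add: algebra_simps)
      have "d*d \<le> (10*t* s)*(10*t* s)" apply (rule mult_mono) using d10 d0 t0 s1 by (auto)
      moreover have "(10*t* s)*(10*t* s) = 100*(t*t)*(s* s)" by (simp add: algebra_simps)
      ultimately have "d*d \<le> 100*(t*t)*(s* s)" by simp
      hence "2*p \<le> 100*(t*t)*N" unfolding ss pd .
      hence "p \<le> 50*(t*t)*N" by (simp add: algebra_simps)
      also have "\<dots> \<le> 3*t*N"
      proof -
        have "t*t \<le> (3/50)*t" apply (rule mult_right_mono) using T t0 by auto
        hence "50*(t*t) \<le> 3*t" by simp
        thus ?thesis by (rule mult_right_mono) (use N2 in simp)
      qed
      finally have p3: "p \<le> 3*t*N" .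
      have den: "m + 1 - 3*\<sigma>* s \<ge> N*(1-6*t)" using p3 sgsN by (simp add: p_def algebra_simps)
      have den0: "N*(1-6*t) > 0" using T N2 by simp
      have "\<epsilon>*(N*(1-6*t)) \<le> \<epsilon>*(m + 1 - 3*\<sigma>* s)" apply (rule mult_left_mono) using den e0 by simp_all
      also have "\<dots> \<le> 6*\<sigma>* s*(l+d)" using F3 by simp
      also have "\<dots> = 6*t*N*(l+d)"
      proof - have "6*\<sigma>* s*(l+d) = 6*(\<sigma>* s)*(l+d)" by simp thus ?thesis using sgsN by simp qed
      also have "\<dots> \<le> 6*t*(N*(l + 29*t* s - 6*t*l - 174*(t*t)* s))"
      proof -
        have A1: "t*l \<le> t* s" apply (rule mult_left_mono) using ls t0 by (auto)
        have "t*t \<le> (3/50)*t" apply (rule mult_right_mono) using T t0 by auto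
        hence "(t*t)* s \<le> ((3/50)*t)* s" by (rule mult_right_mono) (use s1 in simp)
        hence A2: "(t*t)* s \<le> (3/50)*(t* s)" by (simp add: algebra_simps)
        have A3: "d \<le> 10*(t* s)" using d10 by (simp add: algebra_simps)
        have H0: "l + d \<le> l + 29*(t* s) - 6*(t*l) - 174*((t*t)* s)" using A1 A2 A3 \<open>t* s \<ge> 0\<close> by linarith
        have H: "l + d \<le> l + 29*t* s - 6*t*l - 174*(t*t)* s" using H0 by (simp add: algebra_simps)
        have "(6*t*N)*(l+d) \<le> (6*t*N)*(l + 29*t* s - 6*t*l - 174*(t*t)* s)" by (rule mult_left_mono[OF H]) (use t0 N2 in simp)
        thus ?thesis by (simp add: algebra_simps)
      qed
      also have "\<dots> = (6*(l + 29*t* s)*t)*(N*(1-6*t))" by (simp add: algebra_simps)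
      finally have "\<epsilon>*(N*(1-6*t)) \<le> (6*(l + 29*t* s)*t)*(N*(1-6*t))" .
      thus ?thesis using den0 by (rule mult_right_le_imp_le)
    qed
  qed
thus ?thesis using B by simp
qed

lemma F3_arith:
  fixes m \<epsilon> \<sigma> R Q c K s :: real
  assumes I: "m*\<epsilon>\<^sup>2 + 2*(\<sigma>*R) + \<epsilon>\<^sup>2*(1 + \<sigma>*Q) \<le> 0"
    and Rc: "-R \<le> \<epsilon>*c" and cK: "c \<le> K" and Qs: "Q \<ge> -3* s" and sg: "\<sigma> \<ge> 0" and e0: "\<epsilon> \<ge> 0" and K0: "K \<ge> 0"
  shows "\<epsilon>*(m + 1 - 3*\<sigma>* s) \<le> 2*\<sigma>*K"
proof (cases "\<epsilon> = 0")
  case True thus ?thesis using sg K0 by simp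
next
  case False
  hence ep: "\<epsilon> > 0" using e0 by simp
  have "\<sigma>*(-R) \<le> \<sigma>*(\<epsilon>*c)" using Rc sg by (rule mult_left_mono)
  moreover have "\<epsilon>*c \<le> \<epsilon>*K" using cK e0 by (rule mult_left_mono)
  hence "\<sigma>*(\<epsilon>*c) \<le> \<sigma>*(\<epsilon>*K)" using sg by (rule mult_left_mono)
  moreover have "\<sigma>*(-3* s) \<le> \<sigma>*Q" using Qs sg by (rule mult_left_mono)
  hence "\<epsilon>\<^sup>2*(\<sigma>*(-3* s)) \<le> \<epsilon>\<^sup>2*(\<sigma>*Q)" by (rule mult_left_mono) simp
  ultimately have G: "\<epsilon>\<^sup>2*(m + 1 - 3*\<sigma>* s) \<le> \<epsilon>*(2*\<sigma>*K)"
  proof -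
    assume a1: "\<sigma>*(-R) \<le> \<sigma>*(\<epsilon>*c)" and a2: "\<sigma>*(\<epsilon>*c) \<le> \<sigma>*(\<epsilon>*K)"
      and a3: "\<epsilon>\<^sup>2*(\<sigma>*(-3* s)) \<le> \<epsilon>\<^sup>2*(\<sigma>*Q)"
    have e1: "\<epsilon>\<^sup>2*(m + 1 - 3*\<sigma>* s) = m*\<epsilon>\<^sup>2 + \<epsilon>\<^sup>2 + \<epsilon>\<^sup>2*(\<sigma>*(-3* s))" by (simp add: algebra_simps)
    have e2: "\<epsilon>\<^sup>2*(1 + \<sigma>*Q) = \<epsilon>\<^sup>2 + \<epsilon>\<^sup>2*(\<sigma>*Q)" by (simp add: algebra_simps)
    have e3: "\<epsilon>*(2*\<sigma>*K) = 2*(\<sigma>*(\<epsilon>*K))" by (simp add: algebra_simps)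
    have e4: "\<sigma>*(-R) = -(\<sigma>*R)" by simp
    show ?thesis using I a1 a2 a3 e1 e2 e3 e4 by argo
  qed
  hence "(\<epsilon>*(m + 1 - 3*\<sigma>* s))*\<epsilon> \<le> (2*\<sigma>*K)*\<epsilon>" by (simp add: power2_eq_square algebra_simps)
  thus ?thesis using ep by (rule mult_right_le_imp_le)
qed



lemma mv_nth: "(A *v v) $ i = (\<Sum>j\<in>UNIV. A$i$j * v$j)"
  by (simp add: matrix_vector_mult_def)

lemma blin: "bounded_linear (\<lambda>v::complex^'n. (A::complex^'n^'n) *v v)"
proof -
  have "linear (\<lambda>v::complex^'n. A *v v)"
    by (rule linearI) (simp_all add: vec_eq_iff matrix_vector_mult_def sum.distrib algebra_simps
          scaleR_sum_right)
  thus ?thesis by (simp add: linear_conv_bounded_linear)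
qed

lemma mv_norm: "norm (A *v v) \<le> op_norm A * norm (v::complex^'n)"
  unfolding op_norm_def by (rule onorm[OF blin])

lemma norm_sq: "(norm (v::complex^'n))\<^sup>2 = (\<Sum>i\<in>UNIV. (cmod (v$i))\<^sup>2)"
  by (simp add: norm_vec_def L2_set_def sum_nonneg)

lemma unimod_norm: "unimod (v::complex^'n) \<Longrightarrow> norm v = sqrt (real CARD('n))"
  by (simp add: norm_vec_def L2_set_def unimod_def)

lemma cinner_bound: "cmod (cinner u v) \<le> norm u * norm (v::complex^'n)"
proof -
  have "cmod (cinner u v) \<le> (\<Sum>i\<in>UNIV. cmod (cnj (u$i) * v$i))"
    unfolding cinner_def by (rule norm_sum)
  also have "\<dots> = (\<Sum>i\<in>UNIV. \<bar>cmod (u$i)\<bar> * \<bar>cmod (v$i)\<bar>)" by (simp add: norm_mult)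
  also have "\<dots> \<le> L2_set (\<lambda>i. cmod (u$i)) UNIV * L2_set (\<lambda>i. cmod (v$i)) UNIV"
    by (rule L2_set_mult_ineq)
  also have "\<dots> = norm u * norm v" by (simp add: norm_vec_def)
  finally show ?thesis .
qed

lemma cinner_add_left: "cinner (u + w) v = cinner u v + cinner w v"
  by (simp add: cinner_def sum.distrib algebra_simps)
lemma cinner_add_right: "cinner u (v + w) = cinner u v + cinner u w"
  by (simp add: cinner_def sum.distrib algebra_simps)

lemma qform_add: "qform (A + B) y = qform A y + qform B y"
  by (simp add: qform_def cinner_def matrix_vector_mult_def sum.distrib algebra_simps sum_distrib_left)

lemma qform_scale: "qform (c *\<^sub>R A) y = of_real c * qform A y"
proof -
  have "\<And>i j. (c *\<^sub>R A)$i$j = of_real c * A$i$j"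
  proof -
    fix i j have "(c *\<^sub>R A)$i$j = c *\<^sub>R (A$i$j)" by simp
    also have "\<dots> = of_real c * A$i$j" by (rule scaleR_conv_of_real)
    finally show "(c *\<^sub>R A)$i$j = of_real c * A$i$j" .
  qed
  thus ?thesis by (simp add: qform_def cinner_def matrix_vector_mult_def algebra_simps sum_distrib_left)
qed

lemma cinner_swap: "cnj (cinner u v) = cinner v u"
  by (simp add: cinner_def mult.commute)

lemma qform_outer: "qform (outer z) y = of_real ((cmod (cinner z y))\<^sup>2)"
proof -
  have "qform (outer z) y = (\<Sum>i\<in>UNIV. cnj (y$i) * (\<Sum>j\<in>UNIV. z$i * cnj (z$j) * y$j))"
    by (simp add: qform_def cinner_def outer_def matrix_vector_mult_def)
  also have "\<dots> = (\<Sum>i\<in>UNIV. cnj (y$i) * z$i) * (\<Sum>j\<in>UNIV. cnj (z$j) * y$j)"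
    by (simp add: sum_distrib_left sum_distrib_right mult_ac)
  also have "\<dots> = cnj (cinner z y) * cinner z y" by (simp add: cinner_def mult.commute)
  also have "\<dots> = of_real ((cmod (cinner z y))\<^sup>2)" by (metis complex_norm_square mult.commute)
  finally show ?thesis .
qed

lemma herm_swap:
  assumes "hermitian A"
  shows "cinner x (A *v h) = cnj (cinner h (A *v x))"
proof -
  have "cnj (cinner h (A *v x)) = (\<Sum>j\<in>UNIV. \<Sum>i\<in>UNIV. h$j * (cnj (A$j$i) * cnj (x$i)))"
    by (simp add: cinner_def matrix_vector_mult_def sum_distrib_left)
  also have "\<dots> = (\<Sum>j\<in>UNIV. \<Sum>i\<in>UNIV. cnj (x$i) * (A$i$j * h$j))"
  proof -
    have "\<And>i j. cnj (A$j$i) = A$i$j" using assms unfolding hermitian_def by (metis complex_cnj_cnj)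
    thus ?thesis by (simp add: mult_ac)
  qed
  also have "\<dots> = (\<Sum>i\<in>UNIV. \<Sum>j\<in>UNIV. cnj (x$i) * (A$i$j * h$j))" by (rule sum.swap)
  also have "\<dots> = cinner x (A *v h)"
    by (simp add: cinner_def matrix_vector_mult_def sum_distrib_left)
  finally show ?thesis ..
qed

lemma herm_expand:
  assumes "hermitian A"
  shows "Re (qform A (x + h)) = Re (qform A x) + 2 * Re (cinner h (A *v x)) + Re (qform A h)"
proof -
  have "qform A (x + h) = qform A x + cinner x (A *v h) + cinner h (A *v x) + qform A h"
    by (simp add: qform_def matrix_vector_right_distrib cinner_add_left cinner_add_right)
  thus ?thesis using herm_swap[OF assms, of x h] by simp
qed

lemma cmod_diff_sq:
  assumes "cmod a = 1" "cmod b = 1"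
  shows "(cmod (a - b))\<^sup>2 = 2 - 2 * Re (cnj b * a)"
proof -
  have "(cmod a)\<^sup>2 = 1" "(cmod b)\<^sup>2 = 1" using assms by auto
  hence "(Re a)\<^sup>2 + (Im a)\<^sup>2 = 1" "(Re b)\<^sup>2 + (Im b)\<^sup>2 = 1" by (simp_all add: cmod_power2)
  moreover have "(cmod (a - b))\<^sup>2 = (Re a - Re b)\<^sup>2 + (Im a - Im b)\<^sup>2" by (simp add: cmod_power2)
  ultimately show ?thesis by (simp add: power2_eq_square algebra_simps)
qed

lemma cinner_single: "cinner (\<chi> j. if j = i then a else 0) v = cnj a * v$i"
proof -
  have "cinner (\<chi> j. if j = i then a else 0) v = (\<Sum>j\<in>UNIV. if j = i then cnj a * v$i else 0)"
    unfolding cinner_def by (rule sum.cong) auto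
  thus ?thesis by simp
qed

lemma mv_single: "(A *v (\<chi> j. if j = i then a else 0)) $ k = A$k$i * a"
proof -
  have "(\<Sum>j\<in>UNIV. A$k$j * (if j = i then a else 0)) = (\<Sum>j\<in>UNIV. if j = i then A$k$i * a else 0)"
    by (rule sum.cong) auto
  thus ?thesis by (simp add: matrix_vector_mult_def)
qed

lemma C_mv: "((outer z + c *\<^sub>R W) *v v)$i = z$i * cinner z v + of_real c * (W *v v)$i"
proof -
  have e: "\<And>i j. (c *\<^sub>R W)$i$j = of_real c * W$i$j"
  proof -
    fix i j have "(c *\<^sub>R W)$i$j = c *\<^sub>R (W$i$j)" by simp
    also have "\<dots> = of_real c * W$i$j" by (rule scaleR_conv_of_real)
    finally show "(c *\<^sub>R W)$i$j = of_real c * W$i$j" .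
  qed
  show ?thesis
    by (simp add: matrix_vector_mult_def outer_def cinner_def e sum.distrib sum_distrib_left algebra_simps)
      (simp add: scaleR_conv_of_real)
qed

lemma C_entry: "(outer z + c *\<^sub>R W)$i$j = z$i * cnj (z$j) + of_real c * W$i$j"
proof -
  have "(c *\<^sub>R W)$i$j = c *\<^sub>R (W$i$j)" by simp
  also have "\<dots> = of_real c * W$i$j" by (rule scaleR_conv_of_real)
  finally show ?thesis by (simp add: outer_def)
qed

lemma C_herm:
  assumes "hermitian W" shows "hermitian (outer z + c *\<^sub>R W)"
  unfolding hermitian_def
proof (intro allI)
  fix i j
  have w: "W$i$j = cnj (W$j$i)" using assms unfolding hermitian_def by blast
  show "(outer z + c *\<^sub>R W)$i$j = cnj ((outer z + c *\<^sub>R W)$j$i)"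
    unfolding C_entry w by (simp add: mult.commute)
qed

lemma Re_qform_C: "Re (qform (outer z + c *\<^sub>R W) y) = (cmod (cinner z y))\<^sup>2 + c * Re (qform W y)"
  by (simp add: qform_add qform_scale qform_outer)

lemma unimod_cnj_mult: "cmod w = 1 \<Longrightarrow> cnj w * w = 1"
  by (metis complex_norm_square mult.commute of_real_1 power_one)



theorem lemma6:
  fixes z x :: "complex^'n" and W :: "complex^'n^'n" and \<sigma> :: real
  assumes "CARD('n) \<ge> 2"
    and "\<sigma> \<ge> 0"
    and "unimod z"
    and "discordant z W"
    and "unimod x"
    and "\<forall>y. unimod y \<longrightarrow>
           Re (qform (outer z + \<sigma> *\<^sub>R W) y)
           \<le> Re (qform (outer z + \<sigma> *\<^sub>R W) x)"
    and "cinner z x = complex_of_real (cmod (cinner z x))"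
  shows "inf_norm (x - z) \<le> 6 * (sqrt (ln (real CARD('n))) + 29 * \<sigma>) * \<sigma> / sqrt (real CARD('n))"
proof -
  define N where "N = real CARD('n)"
  define s where "s = sqrt N"
  define l where "l = sqrt (ln N)"
  define C where "C = outer z + \<sigma> *\<^sub>R W"
  define m where "m = cmod (cinner z x)"
  define e where "e = x - z"
  define d where "d = norm e"
  have sg: "\<sigma> \<ge> 0" by fact
  have hW: "hermitian W" using assms(4) unfolding discordant_def by auto
  have opW: "op_norm W \<le> 3* s" using assms(4) unfolding discordant_def N_def s_def by auto
  have infW: "inf_norm (W *v z) \<le> 3 * sqrt (N * ln N)" using assms(4) unfolding discordant_def N_def by auto
  have N2: "N \<ge> 2" using assms(1) unfolding N_def by simp
  have sN: "s* s = N" using N2 by (simp add: s_def)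
  have s1: "s \<ge> 1" using N2 by (simp add: s_def)
  have lnN: "0 \<le> ln N" using N2 by simp
  have l0: "0 \<le> l" using lnN by (simp add: l_def)
  have ls: "l \<le> s"
  proof -
    have "ln N \<le> N - 1" using N2 by (intro ln_le_minus_one) simp
    hence "ln N \<le> N" by simp
    thus ?thesis unfolding l_def s_def by (rule real_sqrt_le_mono)
  qed
  have sqNL: "sqrt (N * ln N) = s * l" by (simp add: s_def l_def real_sqrt_mult)
  have nz: "norm z = s" using assms(3) unimod_norm unfolding s_def N_def by blast
  have nx: "norm x = s" using assms(5) unimod_norm unfolding s_def N_def by blast
  have zz: "cinner z z = of_real N"
  proof -
    have "\<And>i. cnj (z$i) * z$i = 1" using assms(3) unimod_cnj_mult unfolding unimod_def by blast
    hence "cinner z z = (\<Sum>i\<in>(UNIV::'n set). 1)" unfolding cinner_def by simp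
    thus ?thesis by (simp add: N_def)
  qed
  have zx: "cinner z x = of_real m" using assms(7) m_def by simp
  have m0: "m \<ge> 0" by (simp add: m_def)
  have hC: "hermitian C" unfolding C_def by (rule C_herm[OF hW])
  have Wv: "norm (W *v v) \<le> 3* s*norm v" for v
    using mv_norm[of W v] opW by (meson mult_right_mono norm_ge_zero order_trans)
  have Wc: "cmod (cinner u (W *v v)) \<le> norm u * (3* s*norm v)" for u v
    using cinner_bound[of u "W *v v"] Wv[of v] by (meson mult_left_mono norm_ge_zero order_trans)
  have Wq: "cmod (qform W v) \<le> 3* s*(norm v)\<^sup>2" for v
    using Wc[of v v] unfolding qform_def by (simp add: power2_eq_square algebra_simps)
  have ReC: "Re (qform C y) = (cmod (cinner z y))\<^sup>2 + \<sigma> * Re (qform W y)" for y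
    unfolding C_def by (rule Re_qform_C)
  have opt: "Re (qform C y) \<le> Re (qform C x)" if "unimod y" for y
    using assms(6) that unfolding C_def by blast
  have A: "N\<^sup>2 + \<sigma> * Re (qform W z) \<le> m\<^sup>2 + \<sigma> * Re (qform W x)"
    using opt[OF assms(3)] unfolding ReC zz zx using N2 m0 by simp
  have nx2: "(norm x)\<^sup>2 = N" using nx sN by (simp add: power2_eq_square)
  have nz2: "(norm z)\<^sup>2 = N" using nz sN by (simp add: power2_eq_square)
  have qx: "Re (qform W x) \<le> 3 * s * N"
    using complex_Re_le_cmod[of "qform W x"] Wq[of x] nx2 by simp
  have qz: "- Re (qform W z) \<le> 3 * s * N"
    using abs_Re_le_cmod[of "qform W z"] Wq[of z, unfolded nz2] by linarith
  have AA: "N\<^sup>2 - m\<^sup>2 \<le> \<sigma> * (Re (qform W x) - Re (qform W z))"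
    using A by (simp add: algebra_simps)
  have F1: "N\<^sup>2 - m\<^sup>2 \<le> 6*\<sigma>* s*N"
  proof -
    have "\<sigma> * (Re (qform W x) - Re (qform W z)) \<le> \<sigma> * (6 * s * N)"
      by (rule mult_left_mono) (use qx qz sg in auto)
    thus ?thesis using AA by (simp add: algebra_simps)
  qed
  have F2: "N\<^sup>2 - m\<^sup>2 \<le> \<sigma>*(6*N*d + 3* s*d\<^sup>2)"
  proof -
    have ex: "x = z + e" by (simp add: e_def)
    have exp: "Re (qform W x) = Re (qform W z) + 2 * Re (cinner e (W *v z)) + Re (qform W e)"
      using herm_expand[OF hW, of z e] ex by simp
    have "Re (cinner e (W *v z)) \<le> d * (3 * s * s)"
      using complex_Re_le_cmod[of "cinner e (W *v z)"] Wc[of e z] nz by (simp add: d_def)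
    also have "d * (3 * s * s) = 3 * d * (s * s)" by (simp add: algebra_simps)
    also have "\<dots> = 3 * N * d" using sN by simp
    finally have b1: "Re (cinner e (W *v z)) \<le> 3 * N * d" .
    have b2: "Re (qform W e) \<le> 3 * s * d\<^sup>2"
      using complex_Re_le_cmod[of "qform W e"] Wq[of e] by (simp add: d_def)
    have "Re (qform W x) - Re (qform W z) \<le> 6*N*d + 3* s*d\<^sup>2" using exp b1 b2 by linarith
    hence "\<sigma> * (Re (qform W x) - Re (qform W z)) \<le> \<sigma>*(6*N*d + 3* s*d\<^sup>2)"
      by (rule mult_left_mono) (use sg in simp)
    thus ?thesis using AA by linarith
  qed
  have dm: "d\<^sup>2 = 2*N - 2*m"
  proof -
    have "d\<^sup>2 = (\<Sum>i\<in>UNIV. (cmod (e$i))\<^sup>2)" unfolding d_def by (rule norm_sq)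
    also have "\<dots> = (\<Sum>i\<in>UNIV. 2 - 2 * Re (cnj (z$i) * x$i))"
      by (rule sum.cong[OF refl]) (use cmod_diff_sq assms(3,5) in \<open>auto simp: e_def unimod_def\<close>)
    also have "\<dots> = 2*N - 2 * Re (cinner z x)"
      by (simp add: sum_subtractf cinner_def N_def sum_distrib_left)
    also have "\<dots> = 2*N - 2*m" using zx by simp
    finally show ?thesis .
  qed
  have d0: "d \<ge> 0" by (simp add: d_def)
  have coord: "cmod ((x - z)$i) \<le> 6 * (l + 29 * \<sigma>) * \<sigma> / s" for i
  proof -
    define \<epsilon> where "\<epsilon> = cmod ((x - z)$i)"
    have e0: "\<epsilon> \<ge> 0" by (simp add: \<epsilon>_def)
    have e2: "\<epsilon> \<le> 2"
    proof -
      have "\<epsilon> \<le> cmod (x$i) + cmod (z$i)" unfolding \<epsilon>_def by (simp add: norm_triangle_ineq4)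
      thus ?thesis using assms(3,5) unfolding unimod_def by simp
    qed
    have ed: "\<epsilon> \<le> d" unfolding \<epsilon>_def d_def e_def by (rule Finite_Cartesian_Product.norm_nth_le)
    have F3: "\<epsilon>*(m + 1 - 3*\<sigma>* s) \<le> 6*\<sigma>* s*(l + d)"
    proof -
      define a where "a = z$i - x$i"
      define h where "h = (\<chi> j. if j = i then a else (0::complex))"
      define w where "w = (W *v x)$i"
      have zi: "cmod (z$i) = 1" and xi: "cmod (x$i) = 1" using assms(3,5) unfolding unimod_def by auto
      have yu: "unimod (x + h)" unfolding unimod_def
      proof
        fix j show "cmod ((x + h)$j) = 1"
          using assms(5) zi unfolding unimod_def by (cases "j = i") (auto simp: h_def a_def)
      qed
      have o: "Re (qform C (x + h)) \<le> Re (qform C x)" by (rule opt[OF yu])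
      hence I0: "2 * Re (cinner h (C *v x)) + Re (qform C h) \<le> 0"
        using herm_expand[OF hC, of x h] by simp
      have ch: "cinner h (C *v x) = cnj a * (z$i * of_real m + of_real \<sigma> * w)"
        unfolding h_def cinner_single C_def C_mv zx w_def by simp
      have Cii: "C$i$i = 1 + of_real \<sigma> * W$i$i"
        unfolding C_def C_entry using unimod_cnj_mult[OF zi] by (simp add: mult.commute)
      have qh: "qform C h = cnj a * a * C$i$i"
        unfolding qform_def h_def cinner_single mv_single by (simp add: mult_ac)
      have ca: "cmod a = \<epsilon>" unfolding a_def \<epsilon>_def by (simp add: norm_minus_commute)
      have esq: "\<epsilon>\<^sup>2 = 2 - 2 * Re (cnj (z$i) * x$i)"
        unfolding \<epsilon>_def using cmod_diff_sq[OF xi zi] by simp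
      have r1: "Re (cnj a * z$i) = \<epsilon>\<^sup>2 / 2"
      proof -
        have "cnj a * z$i = cnj (z$i) * z$i - cnj (x$i) * z$i" by (simp add: a_def algebra_simps)
        also have "\<dots> = 1 - cnj (cnj (z$i) * x$i)" using unimod_cnj_mult[OF zi] by (simp add: mult.commute)
        finally have "Re (cnj a * z$i) = 1 - Re (cnj (z$i) * x$i)" by simp
        thus ?thesis using esq by simp
      qed
      define R where "R = Re (cnj a * w)"
      define Q where "Q = Re (W$i$i)"
      have Rch: "Re (cinner h (C *v x)) = m * (\<epsilon>\<^sup>2 / 2) + \<sigma> * R"
      proof -
        have "cinner h (C *v x) = of_real m * (cnj a * z$i) + of_real \<sigma> * (cnj a * w)"
          unfolding ch by (simp add: algebra_simps)
        thus ?thesis using r1 by (simp add: R_def)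
      qed
      have Rqh: "Re (qform C h) = \<epsilon>\<^sup>2 * (1 + \<sigma> * Q)"
      proof -
        have "cnj a * a = of_real (\<epsilon>\<^sup>2)" using complex_norm_square[of a] ca by (simp add: mult.commute)
        hence "qform C h = of_real (\<epsilon>\<^sup>2) * (1 + of_real \<sigma> * W$i$i)" unfolding qh Cii by simp
        thus ?thesis by (simp add: Q_def)
      qed
      have I: "m*\<epsilon>\<^sup>2 + 2*(\<sigma>*R) + \<epsilon>\<^sup>2*(1 + \<sigma>*Q) \<le> 0" using I0 Rch Rqh by simp
      have Rc: "-R \<le> \<epsilon> * cmod w"
      proof -
        have "-R \<le> cmod (cnj a * w)" unfolding R_def using abs_Re_le_cmod[of "cnj a * w"] by linarith
        thus ?thesis by (simp add: norm_mult ca)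
      qed
      have cK: "cmod w \<le> 3 * s * (l + d)"
      proof -
        have "W *v x = W *v z + W *v e" by (simp add: e_def matrix_vector_right_distrib[symmetric])
        hence "w = (W *v z)$i + (W *v e)$i" by (simp add: w_def)
        hence "cmod w \<le> cmod ((W *v z)$i) + cmod ((W *v e)$i)" by (simp add: norm_triangle_ineq)
        moreover have "cmod ((W *v z)$i) \<le> inf_norm (W *v z)"
          unfolding inf_norm_def by (rule Max_ge) auto
        moreover have "cmod ((W *v e)$i) \<le> 3 * s * d"
          using Finite_Cartesian_Product.norm_nth_le[of "W *v e" i] Wv[of e] by (simp add: d_def)
        ultimately show ?thesis using infW sqNL by (simp add: algebra_simps)
      qed
      have Qs: "Q \<ge> -3 * s"
      proof -
        define u where "u = (\<chi> j. if j = i then (1::complex) else 0)"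
        have nu: "norm u = 1"
        proof -
          have "(\<Sum>j\<in>UNIV. (cmod (u$j))\<^sup>2) = (\<Sum>j\<in>UNIV. if j = i then 1 else 0)"
            by (rule sum.cong) (auto simp: u_def)
          hence "(norm u)\<^sup>2 = 1" using norm_sq[of u] by simp
          hence "norm u = 1 \<or> norm u = -1" by (simp add: power2_eq_1_iff)
          thus ?thesis using norm_ge_zero[of u] by linarith
        qed
        have "W$i$i = (W *v u)$i" unfolding u_def mv_single by simp
        hence "cmod (W$i$i) \<le> 3 * s"
          using Finite_Cartesian_Product.norm_nth_le[of "W *v u" i] Wv[of u] nu by simp
        thus ?thesis unfolding Q_def using abs_Re_le_cmod[of "W$i$i"] by linarith
      qed
      have K0: "3 * s * (l + d) \<ge> 0" using s1 l0 d0 by simp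
      have "\<epsilon>*(m + 1 - 3*\<sigma>* s) \<le> 2*\<sigma>*(3 * s * (l + d))"
        by (rule F3_arith[OF I Rc cK Qs sg e0 K0])
      thus ?thesis by (simp add: algebra_simps)
    qed
    show ?thesis unfolding \<epsilon>_def[symmetric]
      by (rule final_arith[OF N2 s_def sg l0 ls d0 m0 dm F1 F2 e0 e2 ed F3])
  qed
  show ?thesis
    unfolding inf_norm_def N_def[symmetric] s_def[symmetric] l_def[symmetric]
    using coord by (subst Max_le_iff) auto
qed

end
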